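(* Let $G$ be a group, $S$ a nonempty multiset of elements of $G$, and $\Gamma=\Phi(G,S)$. Then each connected component of $\Gamma$ is isomorphic to $\Phi(\langle S\rangle,S)$, and the set of connected components of $\Gamma$ is in one-to-one correspondence with the set of right cosets of $\langle S\rangle$ in $G$.
   Context: $\langle S\rangle$ is the subgroup generated by the elements of $S$. For a group $G$ and a multiset $S$ of elements of $G$, $\Phi(G,S)$ is the multigraph (parallel edges allowed, edges labeled by elements of $G$) whose vertex set is the union over the members $s$ of $S$ (with multiplicity, a repeated element giving a separate copy of its cosets per occurrence) of $V_s=\{\langle s\rangle x: x\in G\}$ (right cosets), with, for $\langle s\rangle x\in V_s$, $\langle t\rangle y\in V_t$, $s,t$ distinct members of $S$, one edge labeled $g$ between them for each $g\in\langle s\rangle x\cap\langle t\rangle y$, and no other edges. Isomorphism means isomorphism of multigraphs (bijections on vertices and edges compatible with incidence). *)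

theory Defs
  imports "HOL-Algebra.Algebra" "HOL-Library.Multiset"
begin

text \<open>Multigraphs: a vertex set, an edge set and an incidence map sending
each edge to its set of endpoints (parallel edges allowed).\<close>
record ('v, 'e) mgraph =
  mverts :: "'v set"
  medges :: "'e set"
  mends  :: "'e \<Rightarrow> 'v set"

definition mg_isomorphic :: "('v, 'e) mgraph \<Rightarrow> ('w, 'f) mgraph \<Rightarrow> bool" where
  "mg_isomorphic A B \<longleftrightarrow>
     (\<exists>f h. bij_betw f (mverts A) (mverts B) \<and> bij_betw h (medges A) (medges B) \<and>
            (\<forall>e \<in> medges A. mends B (h e) = f ` mends A e))"

definition mg_adj :: "('v, 'e) mgraph \<Rightarrow> 'v \<Rightarrow> 'v \<Rightarrow> bool" where
  "mg_adj A u v \<longleftrightarrow> u \<in> mverts A \<and> v \<in> mverts A \<and> (\<exists>e \<in> medges A. {u, v} \<subseteq> mends A e)"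

definition mg_components :: "('v, 'e) mgraph \<Rightarrow> 'v set set" where
  "mg_components A = {{v. (mg_adj A)\<^sup>*\<^sup>* u v} | u. u \<in> mverts A}"

definition mg_induced :: "('v, 'e) mgraph \<Rightarrow> 'v set \<Rightarrow> ('v, 'e) mgraph" where
  "mg_induced A C = \<lparr> mverts = C, medges = {e \<in> medges A. mends A e \<subseteq> C}, mends = mends A \<rparr>"

text \<open>Occurrences of elements in a multiset: the pair (a, k) with k < count S a
stands for the (k+1)-th copy of a.\<close>
definition occs :: "'a multiset \<Rightarrow> ('a \<times> nat) set" where
  "occs S = {(a, k). k < count S a}"

definition Phi :: "('a, 'm) monoid_scheme \<Rightarrow> 'a multiset \<Rightarrow>
    (('a \<times> nat) \<times> 'a set, (('a \<times> nat) \<times> 'a set) set \<times> 'a) mgraph" where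
  "Phi G S =
    (let V = {(oc, c). oc \<in> occs S \<and> c \<in> rcosets\<^bsub>G\<^esub> (generate G {fst oc})}
     in \<lparr> mverts = V,
          medges = {({u, v}, g) | u v g. u \<in> V \<and> v \<in> V \<and> fst u \<noteq> fst v
                                    \<and> g \<in> snd u \<inter> snd v},
          mends = fst \<rparr>)"

end

theory Submission
  imports Defs
begin

definition vx :: "('a, 'm) monoid_scheme \<Rightarrow> 'a \<times> nat \<Rightarrow> 'a \<Rightarrow> ('a \<times> nat) \<times> 'a set" where
  "vx G oc y = (oc, generate G {fst oc} #>\<^bsub>G\<^esub> y)"

lemma occs_mem: "oc \<in> occs S \<Longrightarrow> fst oc \<in># S"
  by (cases oc) (auto simp: occs_def intro: count_inI)

lemma Phi_verts: "w \<in> mverts (Phi G S) \<longleftrightarrow>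
   fst w \<in> occs S \<and> (\<exists>y\<in>carrier G. snd w = generate G {fst (fst w)} #>\<^bsub>G\<^esub> y)"
  by (cases w) (auto simp: Phi_def Let_def RCOSETS_def)

lemma Phi_edges: "e \<in> medges (Phi G S) \<longleftrightarrow>
   (\<exists>u v g. e = ({u, v}, g) \<and> u \<in> mverts (Phi G S) \<and> v \<in> mverts (Phi G S) \<and> fst u \<noteq> fst v
        \<and> g \<in> snd u \<inter> snd v)"
  by (simp add: Phi_def Let_def)

lemma Phi_ends: "mends (Phi G S) = fst"
  by (simp add: Phi_def Let_def)

definition clz :: "('a, 'm) monoid_scheme \<Rightarrow> 'a multiset \<Rightarrow> 'a set \<Rightarrow> (('a \<times> nat) \<times> 'a set) set" where
  "clz Gr S Y = {w. w \<in> mverts (Phi Gr S) \<and> snd w \<subseteq> Y}"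

context group
begin

lemma vx_in: "oc \<in> occs S \<Longrightarrow> y \<in> carrier G \<Longrightarrow> vx G oc y \<in> mverts (Phi G S)"
  by (auto simp: Phi_verts vx_def)

lemma vert_vx: "w \<in> mverts (Phi G S) \<Longrightarrow> \<exists>y\<in>carrier G. w = vx G (fst w) y"
  by (cases w) (auto simp: Phi_verts vx_def)

lemma K_sub: "a \<in> carrier G \<Longrightarrow> subgroup (generate G {a}) G"
  by (simp add: generate_is_subgroup)

lemma vx_self: "fst oc \<in> carrier G \<Longrightarrow> y \<in> carrier G \<Longrightarrow> y \<in> snd (vx G oc y)"
  by (simp add: vx_def rcos_self K_sub)

lemma step_conn:
  assumes S: "set_mset S \<subseteq> carrier G" and o: "oc \<in> occs S" "oc' \<in> occs S" and y: "y \<in> carrier G"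
  shows "(mg_adj (Phi G S))\<^sup>*\<^sup>* (vx G oc y) (vx G oc' y)"
proof (cases "oc = oc'")
  case True then show ?thesis by simp
next
  case False
  have c: "fst oc \<in> carrier G" "fst oc' \<in> carrier G" using o S occs_mem by blast+
  have "mg_adj (Phi G S) (vx G oc y) (vx G oc' y)"
    unfolding mg_adj_def
  proof (intro conjI bexI)
    show "({vx G oc y, vx G oc' y}, y) \<in> medges (Phi G S)"
      unfolding Phi_edges apply (rule exI[of _ "vx G oc y"], rule exI[of _ "vx G oc' y"], rule exI[of _ y])
      using vx_in[OF o(1) y] vx_in[OF o(2) y] False vx_self[OF c(1) y] vx_self[OF c(2) y]
      by (auto simp: vx_def)
  qed (auto simp: vx_in o y Phi_ends)
  then show ?thesis by blast
qed

lemma vx_absorb: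
  assumes "fst oc \<in> carrier G" "y \<in> carrier G" "t \<in> generate G {fst oc}"
  shows "vx G oc (t \<otimes> y) = vx G oc y"
proof -
  have sg: "subgroup (generate G {fst oc}) G" using assms K_sub by blast
  have "t \<otimes> y \<in> generate G {fst oc} #> y"
    using assms sg by (intro rcosI) (auto dest: subgroup.subset)
  then show ?thesis using repr_independence[OF _ assms(2) sg] by (simp add: vx_def)
qed

lemma conn:
  assumes S: "set_mset S \<subseteq> carrier G" and h: "h \<in> generate G (set_mset S)"
  shows "\<forall>oc oc' y. oc \<in> occs S \<longrightarrow> oc' \<in> occs S \<longrightarrow> y \<in> carrier G \<longrightarrow>
           (mg_adj (Phi G S))\<^sup>*\<^sup>* (vx G oc y) (vx G oc' (h \<otimes> y))"
  using h
proof induction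
  case one
  then show ?case using step_conn[OF S] by simp
next
  case (incl h)
  show ?case
  proof (intro allI impI)
    fix oc oc' y assume o: "oc \<in> occs S" "oc' \<in> occs S" and y: "y \<in> carrier G"
    have oh: "(h, 0) \<in> occs S" using incl by (simp add: occs_def)
    have hc: "h \<in> carrier G" using incl S by blast
    have "vx G (h,0) y = vx G (h,0) (h \<otimes> y)"
      using vx_absorb[of "(h,0)" y h] hc y by (simp add: generate.incl)
    then show "(mg_adj (Phi G S))\<^sup>*\<^sup>* (vx G oc y) (vx G oc' (h \<otimes> y))"
      using step_conn[OF S o(1) oh y] step_conn[OF S oh o(2) m_closed[OF hc y]]
      by (metis (no_types, lifting) rtranclp_trans)
  qed
next
  case (inv h)
  show ?case
  proof (intro allI impI)
    fix oc oc' y assume o: "oc \<in> occs S" "oc' \<in> occs S" and y: "y \<in> carrier G"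
    have oh: "(h, 0) \<in> occs S" using inv by (simp add: occs_def)
    have hc: "h \<in> carrier G" using inv S by blast
    have "vx G (h,0) y = vx G (h,0) (inv h \<otimes> y)"
      using vx_absorb[of "(h,0)" y "inv h"] hc y by (simp add: generate.inv)
    then show "(mg_adj (Phi G S))\<^sup>*\<^sup>* (vx G oc y) (vx G oc' (inv h \<otimes> y))"
      using step_conn[OF S o(1) oh y] step_conn[OF S oh o(2) m_closed[OF inv_closed[OF hc] y]]
      by (metis (no_types, lifting) rtranclp_trans)
  qed
next
  case (eng h1 h2)
  show ?case
  proof (intro allI impI)
    fix oc oc' y assume o: "oc \<in> occs S" "oc' \<in> occs S" and y: "y \<in> carrier G"
    have c: "h1 \<in> carrier G" "h2 \<in> carrier G" using eng(1,2) S generate_in_carrier by blast+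
    have 1: "(mg_adj (Phi G S))\<^sup>*\<^sup>* (vx G oc y) (vx G oc (h2 \<otimes> y))" using eng(4) o y by blast
    have 2: "(mg_adj (Phi G S))\<^sup>*\<^sup>* (vx G oc (h2 \<otimes> y)) (vx G oc' (h1 \<otimes> (h2 \<otimes> y)))"
      using eng(3) o y c by blast
    show "(mg_adj (Phi G S))\<^sup>*\<^sup>* (vx G oc y) (vx G oc' (h1 \<otimes> h2 \<otimes> y))"
      using rtranclp_trans[OF 1 2] by (simp add: m_assoc c y)
  qed
qed

lemma K_le: "set_mset S \<subseteq> carrier G \<Longrightarrow> oc \<in> occs S \<Longrightarrow> generate G {fst oc} \<subseteq> generate G (set_mset S)"
  using mono_generate occs_mem by (metis empty_subsetI insert_subset)

lemma vx_sub:
  assumes S: "set_mset S \<subseteq> carrier G" and o: "oc \<in> occs S"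
  shows "snd (vx G oc y) \<subseteq> generate G (set_mset S) #> y"
  using K_le[OF S o] by (auto simp: vx_def r_coset_def)

lemma H_sub: "set_mset S \<subseteq> carrier G \<Longrightarrow> subgroup (generate G (set_mset S)) G"
  by (simp add: generate_is_subgroup)

lemma comp_eq:
  assumes S: "set_mset S \<subseteq> carrier G" and o: "oc \<in> occs S" and y: "y \<in> carrier G"
  shows "{w. (mg_adj (Phi G S))\<^sup>*\<^sup>* (vx G oc y) w}
       = {w \<in> mverts (Phi G S). snd w \<subseteq> generate G (set_mset S) #> y}"
    (is "?L = ?R")
proof
  have sg: "subgroup (generate G (set_mset S)) G" using H_sub[OF S] .
  show "?L \<subseteq> ?R"
  proof
    fix w assume "w \<in> ?L"
    then have "(mg_adj (Phi G S))\<^sup>*\<^sup>* (vx G oc y) w" by simp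
    then show "w \<in> ?R"
    proof induction
      case base
      then show ?case using vx_in[OF o y] vx_sub[OF S o] by auto
    next
      case (step w w')
      from step(2) obtain e where w': "w' \<in> mverts (Phi G S)" and e: "e \<in> medges (Phi G S)"
        and we: "{w, w'} \<subseteq> fst e"
        unfolding mg_adj_def Phi_ends by blast
      from e obtain p q g where eq: "e = ({p,q}, g)" and g: "g \<in> snd p \<inter> snd q"
        unfolding Phi_edges by blast
      have gw: "g \<in> snd w" "g \<in> snd w'" using we g eq by auto
      obtain y' where y': "y' \<in> carrier G" "w' = vx G (fst w') y'" using vert_vx[OF w'] by blast
      have ow': "fst w' \<in> occs S" using w' Phi_verts by blast
      have s': "snd w' \<subseteq> generate G (set_mset S) #> y'" using vx_sub[OF S ow', of y'] y' by simp
      have g1: "g \<in> generate G (set_mset S) #> y" using step(3) gw by auto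
      have g2: "g \<in> generate G (set_mset S) #> y'" using s' gw by auto
      have "generate G (set_mset S) #> y' = generate G (set_mset S) #> y"
        using repr_independence[OF g1 y sg] repr_independence[OF g2 y'(1) sg] by simp
      then show ?case using w' s' by simp
    qed
  qed
  show "?R \<subseteq> ?L"
  proof
    fix w assume w: "w \<in> ?R"
    obtain y' where y': "y' \<in> carrier G" "w = vx G (fst w) y'" using vert_vx w by blast
    have ow: "fst w \<in> occs S" using w Phi_verts by blast
    have "y' \<in> snd w" using vx_self[of "fst w" y'] y' S occs_mem[OF ow] by auto
    then have "y' \<in> generate G (set_mset S) #> y" using w by auto
    then obtain h where h: "h \<in> generate G (set_mset S)" "y' = h \<otimes> y" by (auto simp: r_coset_def)
    have c: "(mg_adj (Phi G S))\<^sup>*\<^sup>* (vx G oc y) (vx G (fst w) (h \<otimes> y))"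
      using conn[OF S h(1)] o ow y by blast
    have "w = vx G (fst w) (h \<otimes> y)" using y'(2) h(2) by metis
    then show "w \<in> ?L" using c by (metis mem_Collect_eq)
  qed
qed


lemma comps_eq:
  assumes S: "set_mset S \<subseteq> carrier G" and ne: "S \<noteq> {#}"
  shows "mg_components (Phi G S) = clz G S ` (rcosets (generate G (set_mset S)))"
proof
  show "mg_components (Phi G S) \<subseteq> clz G S ` (rcosets (generate G (set_mset S)))"
  proof
    fix C assume "C \<in> mg_components (Phi G S)"
    then obtain u where u: "u \<in> mverts (Phi G S)" "C = {v. (mg_adj (Phi G S))\<^sup>*\<^sup>* u v}"
      unfolding mg_components_def by blast
    obtain y where y: "y \<in> carrier G" "u = vx G (fst u) y" using vert_vx[OF u(1)] by blast
    have o: "fst u \<in> occs S" using u Phi_verts by blast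
    have "C = clz G S (generate G (set_mset S) #> y)"
      using comp_eq[OF S o y(1)] u(2) y(2) by (simp add: clz_def)
    moreover have "generate G (set_mset S) #> y \<in> rcosets (generate G (set_mset S))"
      using rcosetsI[OF _ y(1)] H_sub[OF S] subgroup.subset by blast
    ultimately show "C \<in> clz G S ` (rcosets (generate G (set_mset S)))" by blast
  qed
  show "clz G S ` (rcosets (generate G (set_mset S))) \<subseteq> mg_components (Phi G S)"
  proof
    fix C assume "C \<in> clz G S ` (rcosets (generate G (set_mset S)))"
    then obtain y where y: "y \<in> carrier G" "C = clz G S (generate G (set_mset S) #> y)"
      by (auto simp: RCOSETS_def)
    obtain a where a: "a \<in># S" using ne by (meson multiset_nonemptyE)
    have o: "(a,0) \<in> occs S" using a by (simp add: occs_def)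
    have "C = {w. (mg_adj (Phi G S))\<^sup>*\<^sup>* (vx G (a,0) y) w}"
      using comp_eq[OF S o y(1)] y(2) by (simp add: clz_def)
    then show "C \<in> mg_components (Phi G S)"
      unfolding mg_components_def using vx_in[OF o y(1)] by blast
  qed
qed

lemma cl_inj:
  assumes S: "set_mset S \<subseteq> carrier G" and ne: "S \<noteq> {#}"
  shows "inj_on (clz G S) (rcosets (generate G (set_mset S)))"
proof
  fix Q Q2 assume Q: "Q \<in> rcosets (generate G (set_mset S))" and Q2: "Q2 \<in> rcosets (generate G (set_mset S))"
    and eq: "clz G S Q = clz G S Q2"
  have sg: "subgroup (generate G (set_mset S)) G" using H_sub[OF S] .
  obtain x where x: "x \<in> carrier G" "Q = generate G (set_mset S) #> x" using Q by (auto simp: RCOSETS_def)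
  obtain x' where x': "x' \<in> carrier G" "Q2 = generate G (set_mset S) #> x'" using Q2 by (auto simp: RCOSETS_def)
  obtain a where a: "a \<in># S" using ne by (meson multiset_nonemptyE)
  have o: "(a,0) \<in> occs S" using a by (simp add: occs_def)
  have "vx G (a,0) x \<in> clz G S Q" using vx_in[OF o x(1)] vx_sub[OF S o, of x] x by (simp add: clz_def)
  then have "vx G (a,0) x \<in> clz G S Q2" using eq by simp
  then have "snd (vx G (a,0) x) \<subseteq> Q2" by (simp add: clz_def)
  moreover have "x \<in> snd (vx G (a,0) x)" using vx_self[of "(a,0)" x] a S x by auto
  ultimately have "x \<in> Q2" by auto
  then show "Q = Q2" using repr_independence[OF _ x'(1) sg] x x' by simp
qed

lemma V_car: "set_mset S \<subseteq> carrier G \<Longrightarrow> w \<in> mverts (Phi G S) \<Longrightarrow> snd w \<subseteq> carrier G"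
  unfolding Phi_verts
  by (metis occs_mem generate_incl r_coset_subset_G empty_subsetI insert_subset subsetD)

lemma PhiB_verts:
  assumes S: "set_mset S \<subseteq> carrier G"
  shows "w \<in> mverts (Phi (G\<lparr>carrier := generate G (set_mset S)\<rparr>) S) \<longleftrightarrow>
   fst w \<in> occs S \<and> (\<exists>z\<in>generate G (set_mset S). snd w = generate G {fst (fst w)} #> z)"
proof -
  have sg: "subgroup (generate G (set_mset S)) G" using H_sub[OF S] .
  have "fst w \<in> occs S \<Longrightarrow> generate (G\<lparr>carrier := generate G (set_mset S)\<rparr>) {fst (fst w)}
         = generate G {fst (fst w)}"
    using generate_consistent[OF _ sg] occs_mem generate.incl by (metis empty_subsetI insert_subset)
  then show ?thesis unfolding Phi_verts by auto
qed

lemma iso_comp: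
  assumes S: "set_mset S \<subseteq> carrier G" and x: "x \<in> carrier G"
  shows "mg_isomorphic (mg_induced (Phi G S) (clz G S (generate G (set_mset S) #> x)))
            (Phi (G\<lparr>carrier := generate G (set_mset S)\<rparr>) S)"
proof -
  define H where "H = generate G (set_mset S)"
  define C where "C = clz G S (H #> x)"
  define B where "B = Phi (G\<lparr>carrier := H\<rparr>) S"
  define A where "A = mg_induced (Phi G S) C"
  have sg: "subgroup H G" using H_sub[OF S] H_def by simp
  have Hc: "H \<subseteq> carrier G" using sg subgroup.subset by blast
  define f :: "('a \<times> nat) \<times> 'a set \<Rightarrow> ('a \<times> nat) \<times> 'a set" where "f = (\<lambda>w. (fst w, snd w #> inv x))"
  define fi :: "('a \<times> nat) \<times> 'a set \<Rightarrow> ('a \<times> nat) \<times> 'a set" where "fi = (\<lambda>w. (fst w, snd w #> x))"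
  have Kc: "\<And>oc. oc \<in> occs S \<Longrightarrow> generate G {fst oc} \<subseteq> carrier G"
    using S occs_mem generate_incl by (metis empty_subsetI insert_subset subsetD)
  have vA: "f w \<in> mverts B \<and> fi (f w) = w" if w: "w \<in> C" for w
  proof -
    have wV: "w \<in> mverts (Phi G S)" and ws: "snd w \<subseteq> H #> x" using w by (auto simp: C_def clz_def)
    obtain y where y: "y \<in> carrier G" "w = vx G (fst w) y" using vert_vx[OF wV] by blast
    have ow: "fst w \<in> occs S" using wV Phi_verts by blast
    have "y \<in> snd w" using vx_self[of "fst w" y] y S occs_mem[OF ow] by auto
    then have "y \<in> H #> x" using ws by auto
    then obtain h where h: "h \<in> H" "y = h \<otimes> x" by (auto simp: r_coset_def)
    have hc: "h \<in> carrier G" using h Hc by auto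
    have sw: "snd w = generate G {fst (fst w)} #> (h \<otimes> x)" using arg_cong[OF y(2), of snd] h(2) by (simp add: vx_def)
    have "snd (f w) = generate G {fst (fst w)} #> h"
      using sw Kc[OF ow] hc x by (simp add: f_def coset_mult_assoc m_assoc)
    then have 1: "f w \<in> mverts B" using PhiB_verts[OF S] ow h(1) by (auto simp: B_def H_def f_def)
    have "fi (f w) = (fst w, generate G {fst (fst w)} #> (h \<otimes> x))"
      using \<open>snd (f w) = _\<close> Kc[OF ow] hc x by (simp add: fi_def f_def coset_mult_assoc)
    then show ?thesis using 1 sw by (metis prod.collapse)
  qed
  have vB: "fi w \<in> C \<and> f (fi w) = w" if w: "w \<in> mverts B" for w
  proof -
    obtain z where z: "z \<in> H" "snd w = generate G {fst (fst w)} #> z" and ow: "fst w \<in> occs S"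
      using w PhiB_verts[OF S] by (auto simp: B_def H_def)
    have zc: "z \<in> carrier G" using z Hc by auto
    have s1: "snd (fi w) = generate G {fst (fst w)} #> (z \<otimes> x)"
      using z Kc[OF ow] zc x by (simp add: fi_def coset_mult_assoc)
    have fiv: "fi w = vx G (fst w) (z \<otimes> x)" using s1 by (simp add: vx_def fi_def)
    have "z \<otimes> x \<in> H #> x" using rcosI[OF z(1) Hc x] .
    then have eqc: "H #> x = H #> (z \<otimes> x)" using repr_independence[OF _ x sg] by simp
    have "snd (fi w) \<subseteq> H #> x" using fiv vx_sub[OF S ow, of "z \<otimes> x"] eqc H_def by simp
    then have 1: "fi w \<in> C" using fiv vx_in[OF ow] zc x by (simp add: C_def clz_def)
    have "snd (f (fi w)) = generate G {fst (fst w)} #> z"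
      using s1 Kc[OF ow] zc x by (simp add: f_def coset_mult_assoc m_assoc)
    then have "f (fi w) = w" using z by (simp add: f_def fi_def prod_eq_iff)
    then show ?thesis using 1 by simp
  qed
  define he where "he = (\<lambda>e::(('a \<times> nat) \<times> 'a set) set \<times> 'a. (f ` fst e, snd e \<otimes> inv x))"
  define hi where "hi = (\<lambda>e::(('a \<times> nat) \<times> 'a set) set \<times> 'a. (fi ` fst e, snd e \<otimes> x))"
  have CV: "C \<subseteq> mverts (Phi G S)" by (auto simp: C_def clz_def)
  have eA: "he e \<in> medges B \<and> hi (he e) = e" if e: "e \<in> medges A" for e
  proof -
    have e1: "e \<in> medges (Phi G S)" and e2: "fst e \<subseteq> C" using e by (auto simp: A_def mg_induced_def Phi_ends)
    obtain u v g where eq: "e = ({u,v},g)" and u: "u \<in> mverts (Phi G S)" and v: "v \<in> mverts (Phi G S)"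
      and uv: "fst u \<noteq> fst v" and g: "g \<in> snd u" "g \<in> snd v"
      using e1 unfolding Phi_edges by blast
    have uC: "u \<in> C" and vC: "v \<in> C" using e2 eq by auto
    have gc: "g \<in> carrier G" using V_car[OF S u] g by auto
    have heq: "he e = ({f u, f v}, g \<otimes> inv x)" using eq by (simp add: he_def)
    have g1: "g \<otimes> inv x \<in> snd (f u)" "g \<otimes> inv x \<in> snd (f v)" using g by (auto simp: f_def r_coset_def)
    have "he e \<in> medges B"
      unfolding heq B_def H_def[symmetric] Phi_edges
      apply (rule exI[of _ "f u"], rule exI[of _ "f v"], rule exI[of _ "g \<otimes> inv x"])
      using vA[OF uC] vA[OF vC] uv g1 by (auto simp: f_def B_def)
    moreover have "hi (he e) = e" using heq vA[OF uC] vA[OF vC] eq gc x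
      by (simp add: hi_def m_assoc)
    ultimately show ?thesis by simp
  qed
  have eB: "hi e \<in> medges A \<and> he (hi e) = e" if e: "e \<in> medges B" for e
  proof -
    obtain u v g where eq: "e = ({u,v},g)" and u: "u \<in> mverts B" and v: "v \<in> mverts B"
      and uv: "fst u \<noteq> fst v" and g: "g \<in> snd u" "g \<in> snd v"
      using e unfolding B_def Phi_edges by blast
    have gc: "g \<in> carrier G"
    proof -
      obtain z where z: "z \<in> H" "snd u = generate G {fst (fst u)} #> z" and ow: "fst u \<in> occs S"
        using u PhiB_verts[OF S] by (auto simp: B_def H_def)
      show ?thesis using g(1) z Hc Kc[OF ow] r_coset_subset_G by blast
    qed
    have heq: "hi e = ({fi u, fi v}, g \<otimes> x)" using eq by (simp add: hi_def)
    have g1: "g \<otimes> x \<in> snd (fi u)" "g \<otimes> x \<in> snd (fi v)" using g by (auto simp: fi_def r_coset_def)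
    have "hi e \<in> medges (Phi G S)"
      unfolding heq Phi_edges
      apply (rule exI[of _ "fi u"], rule exI[of _ "fi v"], rule exI[of _ "g \<otimes> x"])
      using vB[OF u] vB[OF v] CV uv g1 by (auto simp: fi_def)
    moreover have "fst (hi e) \<subseteq> C" using heq vB[OF u] vB[OF v] by simp
    ultimately have "hi e \<in> medges A" by (simp add: A_def mg_induced_def Phi_ends)
    moreover have "he (hi e) = e" using heq vB[OF u] vB[OF v] eq gc x
      by (simp add: he_def m_assoc)
    ultimately show ?thesis by simp
  qed
  have b1: "bij_betw f (mverts A) (mverts B)"
    by (rule bij_betw_byWitness[where f'=fi]) (use vA vB in \<open>auto simp: A_def mg_induced_def\<close>)
  have b2: "bij_betw he (medges A) (medges B)"
    by (rule bij_betw_byWitness[where f'=hi]) (use eA eB in auto)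
  have b3: "\<forall>e \<in> medges A. mends B (he e) = f ` mends A e"
    by (simp add: A_def B_def mg_induced_def Phi_ends he_def)
  show ?thesis unfolding mg_isomorphic_def using b1 b2 b3 by (auto simp: A_def B_def C_def H_def)
qed

end

theorem proposition2:
  fixes G :: "('a, 'm) monoid_scheme" and S :: "'a multiset"
  assumes "group G"
    and "S \<noteq> {#}"
    and "set_mset S \<subseteq> carrier G"
  shows "(\<forall>C \<in> mg_components (Phi G S).
            mg_isomorphic (mg_induced (Phi G S) C)
                          (Phi (G\<lparr>carrier := generate G (set_mset S)\<rparr>) S))
       \<and> (\<exists>f. bij_betw f (mg_components (Phi G S)) (rcosets\<^bsub>G\<^esub> (generate G (set_mset S))))"
proof -
  interpret group G by fact
  have ce: "mg_components (Phi G S) = clz G S ` (rcosets\<^bsub>G\<^esub> (generate G (set_mset S)))"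
    using comps_eq[OF assms(3,2)] .
  have bij: "bij_betw (clz G S) (rcosets\<^bsub>G\<^esub> (generate G (set_mset S))) (mg_components (Phi G S))"
    using cl_inj[OF assms(3,2)] ce by (simp add: bij_betw_def)
  have 1: "\<forall>C \<in> mg_components (Phi G S).
            mg_isomorphic (mg_induced (Phi G S) C)
                          (Phi (G\<lparr>carrier := generate G (set_mset S)\<rparr>) S)"
    using iso_comp[OF assms(3)] unfolding ce by (auto simp: RCOSETS_def)
  show ?thesis using 1 bij_betw_inv_into[OF bij] by blast
qed

end
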